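(* Let $\boldsymbol{f}\in\mathbb{R}^E$ satisfy $\boldsymbol{u}^-_e<\boldsymbol{f}_e<\boldsymbol{u}^+_e$ for all $e$ and $\boldsymbol{c}^\top\boldsymbol{f}>F^*$. Let $\tilde{\boldsymbol{g}}\in\mathbb{R}^E$ satisfy $\|\mathbf{L}(\boldsymbol{f})^{-1}(\tilde{\boldsymbol{g}}-\boldsymbol{g}(\boldsymbol{f}))\|_\infty\le\varepsilon$ for some $\varepsilon\in(0,1/2]$, and $\tilde{\boldsymbol{\ell}}\in\mathbb{R}^E_{>0}$ satisfy $\tilde{\boldsymbol{\ell}}\approx_2\boldsymbol{\ell}(\boldsymbol{f})$. Let $\boldsymbol{\Delta}$ satisfy $\mathbf{B}^\top\boldsymbol{\Delta}=0$ and $\tilde{\boldsymbol{g}}^\top\boldsymbol{\Delta}/\|\tilde{\mathbf{L}}\boldsymbol{\Delta}\|_1\le-\kappa$ for some $\kappa\in(0,1)$. Then $\frac{|\boldsymbol{c}^\top\boldsymbol{\Delta}|}{\boldsymbol{c}^\top\boldsymbol{f}-F^*}\le|\tilde{\boldsymbol{g}}^\top\boldsymbol{\Delta}|/(\kappa m)$.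
   Context: Setting: $G=(V,E)$ is a directed graph with $m=|E|$ edges and edge-vertex incidence matrix $\mathbf{B}$ (row of edge $(a,b)$ has $+1$ at $a$, $-1$ at $b$); demands $\boldsymbol{d}\in\mathbb{Z}^V$, lower/upper capacities $\boldsymbol{u}^-,\boldsymbol{u}^+\in\mathbb{Z}^E$, and costs $\boldsymbol{c}\in\mathbb{Z}^E$ are integers bounded in absolute value by $U$. $F^*=\min\{\boldsymbol{c}^\top\boldsymbol{f}:\mathbf{B}^\top\boldsymbol{f}=\boldsymbol{d},\ \boldsymbol{u}^-\le\boldsymbol{f}\le\boldsymbol{u}^+\}$. Let $\alpha=1/(1000\log(mU))$. Lengths $\boldsymbol{\ell}(\boldsymbol{f})_e=(\boldsymbol{u}^+_e-\boldsymbol{f}_e)^{-1-\alpha}+(\boldsymbol{f}_e-\boldsymbol{u}^-_e)^{-1-\alpha}$; gradients $\boldsymbol{g}(\boldsymbol{f})_e=20m(\boldsymbol{c}^\top\boldsymbol{f}-F^* )^{-1}\boldsymbol{c}_e+\alpha(\boldsymbol{u}^+_e-\boldsymbol{f}_e)^{-1-\alpha}-\alpha(\boldsymbol{f}_e-\boldsymbol{u}^-_e)^{-1-\alpha}$ (the gradient of $\Phi(\boldsymbol{f})=20m\log(\boldsymbol{c}^\top\boldsymbol{f}-F^* )+\sum_e((\boldsymbol{u}^+_e-\boldsymbol{f}_e)^{-\alpha}+(\boldsymbol{f}_e-\boldsymbol{u}^-_e)^{-\alpha})$). $\mathbf{L}(\boldsymbol{f})=\mathrm{diag}(\boldsymbol{\ell}(\boldsymbol{f}))$,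 $\tilde{\mathbf{L}}=\mathrm{diag}(\tilde{\boldsymbol{\ell}})$. $\boldsymbol{x}\approx_\beta\boldsymbol{y}$ means $\beta^{-1}\boldsymbol{y}_i\le\boldsymbol{x}_i\le\beta\boldsymbol{y}_i$ for all $i$. *)

theory Defs
  imports Complex_Main
begin

text \<open>The incidence matrix B has row e with +1 at src e and -1 at dst e,
  so (B^T f)_v = sum of f over edges leaving v minus sum over edges entering v.\<close>

definition BT :: "'e set \<Rightarrow> ('e \<Rightarrow> 'v) \<Rightarrow> ('e \<Rightarrow> 'v) \<Rightarrow> ('e \<Rightarrow> real) \<Rightarrow> 'v \<Rightarrow> real" where
  "BT E src dst f v = (\<Sum>e\<in>E. (if src e = v then 1 else 0) * f e - (if dst e = v then 1 else 0) * f e)"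

definition feasible ::
  "'v set \<Rightarrow> 'e set \<Rightarrow> ('e \<Rightarrow> 'v) \<Rightarrow> ('e \<Rightarrow> 'v) \<Rightarrow> ('v \<Rightarrow> int) \<Rightarrow> ('e \<Rightarrow> int) \<Rightarrow> ('e \<Rightarrow> int)
   \<Rightarrow> ('e \<Rightarrow> real) \<Rightarrow> bool" where
  "feasible V E src dst d um up f \<longleftrightarrow>
     (\<forall>v\<in>V. BT E src dst f v = real_of_int (d v)) \<and>
     (\<forall>e\<in>E. real_of_int (um e) \<le> f e \<and> f e \<le> real_of_int (up e))"

definition Fstar ::
  "'v set \<Rightarrow> 'e set \<Rightarrow> ('e \<Rightarrow> 'v) \<Rightarrow> ('e \<Rightarrow> 'v) \<Rightarrow> ('v \<Rightarrow> int) \<Rightarrow> ('e \<Rightarrow> int) \<Rightarrow> ('e \<Rightarrow> int)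
   \<Rightarrow> ('e \<Rightarrow> int) \<Rightarrow> real" where
  "Fstar V E src dst d um up c =
     Inf ((\<lambda>f. \<Sum>e\<in>E. real_of_int (c e) * f e) ` {f. feasible V E src dst d um up f})"

definition alpha :: "nat \<Rightarrow> real \<Rightarrow> real" where
  "alpha m U = 1 / (1000 * log 2 (real m * U))"

definition lengths :: "real \<Rightarrow> ('e \<Rightarrow> int) \<Rightarrow> ('e \<Rightarrow> int) \<Rightarrow> ('e \<Rightarrow> real) \<Rightarrow> 'e \<Rightarrow> real" where
  "lengths a um up f e = (real_of_int (up e) - f e) powr (-1 - a) + (f e - real_of_int (um e)) powr (-1 - a)"

definition grad :: "nat \<Rightarrow> real \<Rightarrow> real \<Rightarrow> ('e \<Rightarrow> int) \<Rightarrow> ('e \<Rightarrow> int) \<Rightarrow> ('e \<Rightarrow> int) \<Rightarrow> 'e set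
   \<Rightarrow> ('e \<Rightarrow> real) \<Rightarrow> 'e \<Rightarrow> real" where
  "grad m a Fs c um up E f e =
     20 * real m * inverse ((\<Sum>e'\<in>E. real_of_int (c e') * f e') - Fs) * real_of_int (c e)
     + a * (real_of_int (up e) - f e) powr (-1 - a) - a * (f e - real_of_int (um e)) powr (-1 - a)"

end

theory Submission imports Defs begin
lemma core_arith:
  fixes al s p r :: real
  assumes "al > 9" "0<s" "s<1" "p \<ge> 1 + al*s" "r \<ge> ((1-s)/(1+s))/p" "p + r < 2" "al*(p-r) > 18"
  shows False
proof -
  define t where "t = (1-s)/(1+s)"
  define d where "d = p - 1"
  have p1: "p \<ge> 1" using assms by (smt (verit) mult_pos_pos)
  have ppos: "p > 0" using p1 by simp
  have t1: "t < 1" "t > 0" "t \<ge> 1 - 2*s" using assms unfolding t_def by (auto simp: field_simps)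
  have "p + t/p < 2" using assms t_def by simp
  hence "p*p + t < 2*p" using ppos by (simp add: field_simps)
  hence dd: "d*d < 2*s" using t1 unfolding d_def by (simp add: algebra_simps)
  have ds: "d \<ge> al*s" using assms d_def by simp
  have als: "al*s > 0" using assms by simp
  have "(al*s)*(al*s) \<le> d*d" using ds als by (meson less_le_not_le mult_mono')
  hence "al*al*s*s < 2*s" using dd by (simp add: algebra_simps)
  hence A: "al*al*s < 2" using assms by simp
  have "(al*d)*(al*d) < 4"
  proof -
    have "(al*d)*(al*d) = (al*al)*(d*d)" by (simp add: algebra_simps)
    also have "\<dots> < (al*al)*(2*s)" using dd assms by simp
    also have "\<dots> < 4" using A by (simp add: algebra_simps)
    finally show ?thesis .
  qed
  hence B: "al*d < 2"
  proof -
    assume q: "(al*d)*(al*d) < 4"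
    show ?thesis
    proof (rule ccontr)
      assume "\<not> al*d < 2"
      hence "al*d \<ge> 2" by simp
      hence "(al*d)*(al*d) \<ge> 2*2" by (intro mult_mono) auto
      thus False using q by simp
    qed
  qed
  have C: "al*s < 1"
  proof -
    have "al*(al*s) < 2" using A by (simp add: algebra_simps)
    moreover have "al*1 \<le> al*(al*s)" if "al*s \<ge> 1" using that assms by (intro mult_left_mono) auto
    ultimately show ?thesis using assms by (cases "al*s \<ge> 1") linarith+
  qed
  have "p - r \<le> p - t/p" using assms t_def by simp
  also have "p - t/p = (p*p - t)/p" using ppos by (simp add: field_simps)
  also have "\<dots> \<le> p*p - t"
  proof -
    have "1*1 \<le> p*p" using p1 by (intro mult_mono) auto
    hence pt: "p*p - t \<ge> 0" using t1 by linarith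
    have "(p*p - t)*1 \<le> (p*p - t)*p" using p1 pt by (intro mult_left_mono) auto
    thus ?thesis using ppos by (simp add: divide_le_eq)
  qed
  also have "\<dots> \<le> 4*s + 2*d" unfolding d_def using dd t1 d_def by (simp add: algebra_simps) 
  finally have "p - r \<le> 4*s + 2*d" .
  hence "al*(p-r) \<le> al*(4*s+2*d)" using assms by simp
  also have "\<dots> < 18" using B C by (simp add: algebra_simps)
  finally show False using assms by simp
qed

lemma core:
  fixes al x y :: real
  assumes al: "al > 9" and x: "0<x" and y: "0<y" and xy: "x+y \<le> 2"
    and h1: "x powr (-1-al) + y powr (-1-al) < 2/x"
    and h2: "al*(x powr (-1-al) - y powr (-1-al)) > 18/x"
  shows False
proof (cases "y \<le> x")
  case True
  have "x powr (-1-al) \<le> y powr (-1-al)" using True y al by (intro powr_mono2') auto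
  hence "al*(x powr (-1-al) - y powr (-1-al)) \<le> 0" using al by (simp add: mult_nonneg_nonpos)
  moreover have "18/x > 0" using x by simp
  ultimately show False using h2 by linarith
next
  case False
  define s where "s = 1 - x"
  have s: "0 < s" "s < 1" using False xy x unfolding s_def by auto
  have xs: "x = 1 - s" using s_def by simp
  have Yle: "(1+s) powr (-1-al) \<le> y powr (-1-al)" using xy y al xs by (intro powr_mono2') auto
  define p where "p = x powr (-al)"
  define r where "r = x * (1+s) powr (-1-al)"
  have X: "x powr (-1-al) = p / x" unfolding p_def using x
    by (simp add: powr_diff powr_minus divide_inverse)
  have h1': "p/x + (1+s) powr (-1-al) < 2/x" using h1 Yle X by linarith
  have h2': "al*(p/x - (1+s) powr (-1-al)) > 18/x" using h2 Yle X al
    by (smt (verit) mult_left_mono)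
  have "x*(p/x + (1+s) powr (-1-al)) < x*(2/x)" using h1' x by (intro mult_strict_left_mono) auto
  hence pr: "p + r < 2" using x unfolding r_def by (simp add: distrib_left)
  have "x*(18/x) < x*(al*(p/x - (1+s) powr (-1-al)))" using h2' x by (intro mult_strict_left_mono) auto
  hence pr2: "al*(p - r) > 18" using x unfolding r_def by (simp add: algebra_simps)
  have pbound: "p \<ge> 1 + al*s"
  proof -
    have "ln (1 - s) \<le> - s" using s ln_le_minus_one[of "1-s"] by simp
    have "p = exp (-al * ln (1-s))" unfolding p_def xs using s by (simp add: powr_def)
    also have "\<dots> \<ge> 1 + (-al * ln (1-s))" by (rule exp_ge_add_one_self)
    finally have e: "1 + - al * ln (1 - s) \<le> p" .
    have "al * s \<le> al * (- ln (1-s))" using \<open>ln (1 - s) \<le> - s\<close> al by (intro mult_left_mono) auto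
    thus ?thesis using e by simp
  qed
  have rbound: "r \<ge> ((1-s)/(1+s))/p"
  proof -
    have "(1+s) powr (-al) \<ge> (1/(1-s)) powr (-al)"
      using s al by (intro powr_mono2') (auto simp: field_simps)
    also have "(1/(1-s)) powr (-al) = 1/p" unfolding p_def xs using s
      by (simp add: powr_divide powr_minus divide_inverse inverse_powr)
    finally have a: "(1+s) powr (-al) \<ge> 1/p" .
    have "(1+s) powr (-1-al) = (1+s) powr (-al) / (1+s)" using s
      by (simp add: powr_diff powr_minus divide_inverse)
    hence "r = (1-s) * ((1+s) powr (-al)) / (1+s)" unfolding r_def xs by simp
    also have "\<dots> \<ge> (1-s) * (1/p) / (1+s)" using a s by (intro divide_right_mono mult_left_mono) auto
    finally show ?thesis by (simp add: mult.commute)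
  qed
  show False using core_arith[OF al s pbound rbound pr pr2] .
qed
theorem lemma4p8:
  fixes V :: "'v set" and E :: "'e set" and src dst :: "'e \<Rightarrow> 'v"
    and d :: "'v \<Rightarrow> int" and um up c :: "'e \<Rightarrow> int" and U :: real
    and f gt lt \<Delta> :: "'e \<Rightarrow> real" and \<epsilon> \<kappa> :: real
  assumes finV: "finite V" and finE: "finite E"
    and ends: "\<forall>e\<in>E. src e \<in> V \<and> dst e \<in> V"
    and bd_d: "\<forall>v\<in>V. \<bar>real_of_int (d v)\<bar> \<le> U"
    and bd_e: "\<forall>e\<in>E. \<bar>real_of_int (um e)\<bar> \<le> U \<and> \<bar>real_of_int (up e)\<bar> \<le> U \<and> \<bar>real_of_int (c e)\<bar> \<le> U"
    and feas: "\<exists>h. feasible V E src dst d um up h"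
    and f_int: "\<forall>e\<in>E. real_of_int (um e) < f e \<and> f e < real_of_int (up e)"
    and f_gap: "(\<Sum>e\<in>E. real_of_int (c e) * f e) > Fstar V E src dst d um up c"
    and eps: "0 < \<epsilon>" "\<epsilon> \<le> 1/2"
    and g_approx: "\<forall>e\<in>E. \<bar>gt e - grad (card E) (alpha (card E) U) (Fstar V E src dst d um up c) c um up E f e\<bar>
                          / lengths (alpha (card E) U) um up f e \<le> \<epsilon>"
    and lt_pos: "\<forall>e\<in>E. lt e > 0"
    and lt_approx: "\<forall>e\<in>E. lengths (alpha (card E) U) um up f e / 2 \<le> lt e
                           \<and> lt e \<le> 2 * lengths (alpha (card E) U) um up f e"
    and circ: "\<forall>v\<in>V. BT E src dst \<Delta> v = 0"
    and kap: "0 < \<kappa>" "\<kappa> < 1"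
    and desc: "(\<Sum>e\<in>E. gt e * \<Delta> e) / (\<Sum>e\<in>E. \<bar>lt e * \<Delta> e\<bar>) \<le> - \<kappa>"
  shows "\<bar>\<Sum>e\<in>E. real_of_int (c e) * \<Delta> e\<bar> / ((\<Sum>e\<in>E. real_of_int (c e) * f e) - Fstar V E src dst d um up c)
           \<le> \<bar>\<Sum>e\<in>E. gt e * \<Delta> e\<bar> / (\<kappa> * real (card E))"
proof -
  define m where "m = card E"
  define a where "a = alpha m U"
  define Fs where "Fs = Fstar V E src dst d um up c"
  define G where "G = (\<Sum>e\<in>E. real_of_int (c e) * f e) - Fs"
  define L where "L = (\<lambda>e. lengths a um up f e)"
  define A where "A = (\<lambda>e. (real_of_int (up e) - f e) powr (-1 - a))"
  define B where "B = (\<lambda>e. (f e - real_of_int (um e)) powr (-1 - a))"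
  define Q where "Q = (\<Sum>e\<in>E. gt e * \<Delta> e)"
  define S where "S = (\<Sum>e\<in>E. \<bar>lt e * \<Delta> e\<bar>)"
  define C where "C = (\<Sum>e\<in>E. real_of_int (c e) * \<Delta> e)"
  have Gpos: "G > 0" using f_gap unfolding G_def Fs_def by simp
  have S0: "S \<ge> 0" unfolding S_def by (simp add: sum_nonneg)
  have Spos: "S > 0"
  proof (rule ccontr)
    assume "\<not> S > 0"
    hence "S = 0" using S0 by simp
    thus False using desc kap unfolding S_def by simp
  qed
  have QS: "Q \<le> - \<kappa> * S" using desc Spos unfolding Q_def[symmetric] S_def[symmetric]
    by (simp add: divide_le_eq)
  have QS': "\<kappa> * S \<le> \<bar>Q\<bar>" using QS by simp
  have Ene: "E \<noteq> {}" using Spos unfolding S_def by auto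
  have m1: "m \<ge> 1" using Ene finE unfolding m_def by (simp add: Suc_leI card_gt_0_iff)
  obtain e0 where e0: "e0 \<in> E" using Ene by auto
  have U1: "U \<ge> 1"
  proof (rule ccontr)
    assume "\<not> U \<ge> 1"
    hence "\<bar>real_of_int (um e0)\<bar> < 1" "\<bar>real_of_int (up e0)\<bar> < 1" using bd_e e0 by auto
    hence "um e0 = 0" "up e0 = 0" by linarith+
    thus False using f_int e0 by force
  qed
  have mU: "real m * U \<ge> 1" using m1 U1
    by (metis mult_mono' of_nat_1 of_nat_0_le_iff of_nat_le_iff mult_1_left order_trans zero_le_one)
  have a0: "a \<ge> 0" unfolding a_def alpha_def using mU by simp
  have Apos: "\<And>e. e \<in> E \<Longrightarrow> A e > 0" unfolding A_def using f_int by auto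
  have Bpos: "\<And>e. e \<in> E \<Longrightarrow> B e > 0" unfolding B_def using f_int by auto
  have LAB: "\<And>e. L e = A e + B e" unfolding L_def A_def B_def lengths_def by simp
  have Lpos: "\<And>e. e \<in> E \<Longrightarrow> L e > 0" using Apos Bpos LAB by (simp add: add_pos_pos)
  have grad_eq: "\<And>e. grad m a Fs c um up E f e = 20 * real m * inverse G * real_of_int (c e) + a * A e - a * B e"
    unfolding grad_def G_def A_def B_def by simp
  have gapp: "\<And>e. e \<in> E \<Longrightarrow> \<bar>gt e - (20 * real m * inverse G * real_of_int (c e) + a * A e - a * B e)\<bar> \<le> \<epsilon> * L e"
  proof -
    fix e assume e: "e \<in> E"
    have "\<bar>gt e - grad m a Fs c um up E f e\<bar> / L e \<le> \<epsilon>"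
      using g_approx e unfolding m_def[symmetric] a_def[symmetric] Fs_def[symmetric] L_def by simp
    thus "\<bar>gt e - (20 * real m * inverse G * real_of_int (c e) + a * A e - a * B e)\<bar> \<le> \<epsilon> * L e"
      using Lpos[OF e] grad_eq by (simp add: divide_le_eq mult.commute)
  qed
  have Llt: "\<And>e. e \<in> E \<Longrightarrow> L e \<le> 2 * lt e"
    using lt_approx unfolding m_def[symmetric] a_def[symmetric] L_def by force
  have Sabs: "S = (\<Sum>e\<in>E. lt e * \<bar>\<Delta> e\<bar>)" unfolding S_def
    using lt_pos by (intro sum.cong) (auto simp: abs_mult)
  show ?thesis
  proof (cases "a \<le> 9")
    case True
    define K where "K = 20 * real m * inverse G"
    have Kpos: "K > 0" using Gpos m1 unfolding K_def by simp
    define r where "r = (\<lambda>e. gt e - K * real_of_int (c e))"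
    have rb: "\<And>e. e \<in> E \<Longrightarrow> \<bar>r e\<bar> \<le> 2 * (a + \<epsilon>) * lt e"
    proof -
      fix e assume e: "e \<in> E"
      have ab: "\<bar>A e - B e\<bar> \<le> L e" using Apos[OF e] Bpos[OF e] LAB[of e] by (simp add: abs_le_iff)
      have "\<bar>a * A e - a * B e\<bar> = a * \<bar>A e - B e\<bar>" using a0
        by (simp add: abs_mult right_diff_distrib[symmetric])
      also have "\<dots> \<le> a * L e" using ab a0 by (intro mult_left_mono) auto
      finally have "\<bar>a * A e - a * B e\<bar> \<le> a * L e" .
      hence "\<bar>r e\<bar> \<le> (a + \<epsilon>) * L e" using gapp[OF e] unfolding r_def K_def
        by (simp add: distrib_right)
      also have "\<dots> \<le> (a + \<epsilon>) * (2 * lt e)" using Llt[OF e] a0 eps by (intro mult_left_mono) auto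
      finally show "\<bar>r e\<bar> \<le> 2 * (a + \<epsilon>) * lt e" by (simp add: algebra_simps)
    qed
    have "(\<Sum>e\<in>E. r e * \<Delta> e) = Q - K * C"
      unfolding Q_def C_def r_def by (simp add: left_diff_distrib sum_subtractf sum_distrib_left mult.assoc)
    hence Qdec: "Q = K * C + (\<Sum>e\<in>E. r e * \<Delta> e)" by simp
    have "\<bar>\<Sum>e\<in>E. r e * \<Delta> e\<bar> \<le> (\<Sum>e\<in>E. \<bar>r e\<bar> * \<bar>\<Delta> e\<bar>)"
      by (metis (no_types, lifting) abs_mult sum.cong sum_abs)
    also have "\<dots> \<le> (\<Sum>e\<in>E. 2 * (a + \<epsilon>) * lt e * \<bar>\<Delta> e\<bar>)"
      using rb by (intro sum_mono mult_right_mono) auto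
    also have "\<dots> = 2 * (a + \<epsilon>) * S" unfolding Sabs by (simp add: sum_distrib_left mult.assoc)
    finally have rS: "\<bar>\<Sum>e\<in>E. r e * \<Delta> e\<bar> \<le> 2 * (a + \<epsilon>) * S" .
    have KC: "K * \<bar>C\<bar> \<le> \<bar>Q\<bar> + 2 * (a + \<epsilon>) * S"
      using Qdec rS Kpos by (simp add: abs_mult)
    have "\<kappa> * (K * \<bar>C\<bar>) \<le> \<kappa> * (\<bar>Q\<bar> + 2 * (a + \<epsilon>) * S)"
      using KC kap by (intro mult_left_mono) auto
    also have "\<dots> = \<kappa> * \<bar>Q\<bar> + 2 * (a + \<epsilon>) * (\<kappa> * S)" by (simp add: algebra_simps)
    also have "\<dots> \<le> \<kappa> * \<bar>Q\<bar> + 2 * (a + \<epsilon>) * \<bar>Q\<bar>"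
      using QS' a0 eps by (intro add_left_mono mult_left_mono) auto
    also have "\<dots> = (\<kappa> + 2 * (a + \<epsilon>)) * \<bar>Q\<bar>" by (simp add: algebra_simps)
    also have "\<dots> \<le> 20 * \<bar>Q\<bar>" using True kap eps by (intro mult_right_mono) auto
    finally have main: "\<kappa> * (K * \<bar>C\<bar>) \<le> 20 * \<bar>Q\<bar>" .
    have "\<kappa> * (K * \<bar>C\<bar>) = 20 * (\<kappa> * real m * \<bar>C\<bar> / G)" unfolding K_def
      by (simp add: field_simps)
    hence "\<kappa> * real m * \<bar>C\<bar> / G \<le> \<bar>Q\<bar>" using main by simp
    hence "\<kappa> * real m * \<bar>C\<bar> \<le> \<bar>Q\<bar> * G" using Gpos by (simp add: divide_le_eq)
    hence "\<bar>C\<bar> / G \<le> \<bar>Q\<bar> / (\<kappa> * real m)" using Gpos kap m1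
      by (simp add: divide_le_eq le_divide_eq mult.commute mult.left_commute)
    thus ?thesis unfolding C_def Q_def G_def Fs_def m_def .
  next
    case False
    hence a9: "a > 9" by simp
    have lpos: "log 2 (real m * U) > 0"
    proof (rule ccontr)
      assume "\<not> log 2 (real m * U) > 0"
      hence "a \<le> 0" unfolding a_def alpha_def by (simp add: divide_nonpos_nonneg)
      thus False using a9 by simp
    qed
    have "1000 * log 2 (real m * U) < 1"
    proof (rule ccontr)
      assume "\<not> 1000 * log 2 (real m * U) < 1"
      hence "a \<le> 1" unfolding a_def alpha_def by (simp add: divide_le_eq)
      thus False using a9 by simp
    qed
    hence lsm: "log 2 (real m * U) < 1" by simp
    have mU2: "real m * U < 2"
    proof (rule ccontr)
      assume "\<not> real m * U < 2"
      hence "log 2 (real m * U) \<ge> log 2 2" using mU by (intro log_le_cancel_iff[THEN iffD2]) auto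
      thus False using lsm by simp
    qed
    have mis1: "m = 1"
    proof (rule ccontr)
      assume "m \<noteq> 1"
      hence "real m \<ge> 2" using m1 by simp
      hence "real m * U \<ge> 2 * 1" using U1 by (intro mult_mono) auto
      thus False using mU2 by simp
    qed
    have U2: "U < 2" using mU2 mis1 by simp
    obtain e where Ee: "E = {e}" using mis1 unfolding m_def by (rule card_1_singletonE)
    have eE: "e \<in> E" using Ee by simp
    have Dne: "\<Delta> e \<noteq> 0" using Spos unfolding S_def Ee by auto
    have loop: "dst e = src e"
    proof (rule ccontr)
      assume "dst e \<noteq> src e"
      hence "BT E src dst \<Delta> (src e) = \<Delta> e" unfolding BT_def Ee by simp
      thus False using circ ends eE Dne by auto
    qed
    have BT0: "\<And>h v. BT E src dst h v = 0" unfolding BT_def Ee using loop by simp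
    obtain h0 where h0: "feasible V E src dst d um up h0" using feas by auto
    have d0: "\<forall>v\<in>V. d v = 0" using h0 BT0 unfolding feasible_def by auto
    have feq: "{h. feasible V E src dst d um up h} = {h. real_of_int (um e) \<le> h e \<and> h e \<le> real_of_int (up e)}"
      unfolding feasible_def using d0 BT0 Ee by auto
    have Fs_eq: "Fs = Inf ((\<lambda>h. real_of_int (c e) * h e) ` {h. real_of_int (um e) \<le> h e \<and> h e \<le> real_of_int (up e)})"
      unfolding Fs_def Fstar_def feq by (simp add: Ee)
    have umup: "um e < up e" using f_int eE by force
    have bnds: "\<bar>real_of_int (um e)\<bar> < 2" "\<bar>real_of_int (up e)\<bar> < 2" "\<bar>real_of_int (c e)\<bar> < 2"
      using bd_e eE U2 by auto
    hence ib: "um e \<ge> -1" "up e \<le> 1" "c e = 0 \<or> c e = 1 \<or> c e = -1" by linarith+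
    have width: "real_of_int (up e) - real_of_int (um e) \<le> 2" using ib by linarith
    have sums: "S = lt e * \<bar>\<Delta> e\<bar>" "Q = gt e * \<Delta> e" "C = real_of_int (c e) * \<Delta> e"
      "G = real_of_int (c e) * f e - Fs"
      unfolding S_def Q_def C_def G_def Ee using lt_pos eE by (auto simp: abs_mult)
    have gapp1: "\<bar>gt e - (20 * inverse G * real_of_int (c e) + a * A e - a * B e)\<bar> \<le> \<epsilon> * L e"
      using gapp[OF eE] mis1 by simp
    have klt: "\<kappa> * lt e \<le> \<bar>gt e\<bar>"
    proof -
      have "\<kappa> * lt e * \<bar>\<Delta> e\<bar> \<le> \<bar>gt e\<bar> * \<bar>\<Delta> e\<bar>" using QS' sums by (simp add: abs_mult mult.assoc)
      thus ?thesis using Dne by simp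
    qed
    show ?thesis
    proof (rule ccontr)
      assume "\<not> ?thesis"
      hence viol: "\<bar>Q\<bar> / \<kappa> < \<bar>C\<bar> / G"
        unfolding C_def[symmetric] Q_def[symmetric] G_def[symmetric] Fs_def[symmetric] m_def[symmetric] mis1 by simp
      have c0: "c e \<noteq> 0"
      proof
        assume "c e = 0"
        hence "\<bar>C\<bar> / G = 0" using sums by simp
        moreover have "\<bar>Q\<bar> / \<kappa> \<ge> 0" using kap by simp
        ultimately show False using viol by linarith
      qed
      hence cabs: "\<bar>real_of_int (c e)\<bar> = 1" using ib by auto
      have "\<bar>gt e\<bar> * \<bar>\<Delta> e\<bar> / \<kappa> < \<bar>\<Delta> e\<bar> / G" using viol sums cabs by (simp add: abs_mult)
      hence "\<bar>\<Delta> e\<bar> * (\<bar>gt e\<bar> / \<kappa>) < \<bar>\<Delta> e\<bar> * (1 / G)" by (simp add: algebra_simps)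
      hence "\<bar>gt e\<bar> / \<kappa> < 1 / G" by (rule mult_left_less_imp_less) simp
      hence gtb: "\<bar>gt e\<bar> < \<kappa> / G" using kap by (simp add: divide_less_eq mult.commute)
      hence "\<kappa> * lt e < \<kappa> * (1 / G)" using klt by simp
      hence "lt e < 1 / G" by (rule mult_left_less_imp_less) (use kap in simp)
      hence Lb: "L e < 2 / G" using Llt[OF eE] by simp
      have "\<kappa> / G < 1 / G" using kap Gpos by (simp add: divide_strict_right_mono)
      have "\<epsilon> * L e \<le> L e / 2" using eps Lpos[OF eE] by (simp add: mult_right_mono)
      hence gb: "\<bar>20 * inverse G * real_of_int (c e) + a * A e - a * B e\<bar> < 2 / G"
        using gapp1 gtb Lb \<open>\<kappa> / G < 1 / G\<close> by (simp add: abs_le_iff abs_less_iff)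
      have iG: "inverse G = 1 / G" by (simp add: divide_inverse)
      have c3: "c e = 1 \<or> c e = -1" using ib(3) c0 by auto
      show False using c3
      proof (elim disjE)
        assume c1: "c e = 1"
        have "Fs = real_of_int (um e)" unfolding Fs_eq c1
          using umup by (intro cInf_eq_minimum) (auto intro!: image_eqI[where x="\<lambda>_. real_of_int (um e)"])
        hence Gx: "G = f e - real_of_int (um e)" using sums c1 by simp
        have h1: "(f e - real_of_int (um e)) powr (-1-a) + (real_of_int (up e) - f e) powr (-1-a) < 2 / (f e - real_of_int (um e))"
          using Lb LAB[of e] Gx unfolding A_def B_def by simp
        have "20 / G + a * A e - a * B e < 2 / G" using gb c1 iG by simp
        hence "18 / G < a * (B e - A e)" by (simp add: algebra_simps add_divide_distrib[symmetric]) 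
        hence h2: "a * ((f e - real_of_int (um e)) powr (-1-a) - (real_of_int (up e) - f e) powr (-1-a)) > 18 / (f e - real_of_int (um e))"
          using Gx unfolding A_def B_def by simp
        show False using core[OF a9 _ _ _ h1 h2] f_int eE width by auto
      next
        assume c1: "c e = -1"
        have "Fs = - real_of_int (up e)" unfolding Fs_eq c1
          using umup by (intro cInf_eq_minimum) (auto intro!: image_eqI[where x="\<lambda>_. real_of_int (up e)"])
        hence Gx: "G = real_of_int (up e) - f e" using sums c1 by simp
        have h1: "(real_of_int (up e) - f e) powr (-1-a) + (f e - real_of_int (um e)) powr (-1-a) < 2 / (real_of_int (up e) - f e)"
          using Lb LAB[of e] Gx unfolding A_def B_def by simp
        have "- (20 / G) + a * A e - a * B e > - (2 / G)" using gb c1 iG by simp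
        hence "18 / G < a * (A e - B e)" by (simp add: algebra_simps add_divide_distrib[symmetric]) 
        hence h2: "a * ((real_of_int (up e) - f e) powr (-1-a) - (f e - real_of_int (um e)) powr (-1-a)) > 18 / (real_of_int (up e) - f e)"
          using Gx unfolding A_def B_def by simp
        show False using core[OF a9 _ _ _ h1 h2] f_int eE width by auto
      qed
    qed
  qed
qed
end
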